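(* Let $W$ be a standard Brownian motion with respect to $\mathbb F$, $W_0=0$, and consider the case without hedging instruments ($S\equiv1$), so that $u_A(\tau,\sigma)=E[-\exp(\alpha_A R(\tau,\sigma))]$ and $u_B(\tau,\sigma)=E[-\exp(-\alpha_B R(\tau,\sigma))]$ (i.e. $C_A=C_B=0$). Let $X_t=W_t$ and $Y_t=W_t+\delta$, $t\in[0,T]$, with $0<\delta<(\alpha_A/2)T$ and $\alpha_B>0$. Then both $(\tau,\sigma)=(0,T)$ and $(\tau,\sigma)=(T,0)$ are Nash equilibrium points, and their values differ: $(u_A,u_B)=(-1,-1)$ at $(0,T)$ and $(u_A,u_B)=(-e^{\alpha_A\delta},-e^{-\alpha_B\delta})$ at $(T,0)$.
   Context: $(\Omega,\mathcal F,\mathbb F=(\mathcal F_t)_{t\in[0,T]},P)$ is a filtered probability space with $T\in(0,\infty)$ satisfying the usual conditions; $\mathcal T_0$ is the set of $[0,T]$-valued stopping times. $\alpha_A>0$ and $\alpha_B>0$ are the risk aversions of the seller $A$ and buyer $B$; $R(\tau,\sigma):=X_\tau\mathbf 1_{\{\tau\le\sigma\}}+Y_\sigma\mathbf 1_{\{\sigma<\tau\}}$ is the payoff paid by $A$ to $B$ when $B$ stops at $\tau$ and $A$ at $\sigma$. A pair $(\tau^*,\sigma^* )\in\mathcal T_0^2$ is a Nash equilibrium point if $u_A(\tau^*,\sigma^* )\ge u_A(\tau^*,\sigma)$ and $u_B(\tau^*,\sigma^* )\ge u_B(\tau,\sigma^* )$ for all $\tau,\sigma\in\mathcal T_0$.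 *)

theory Defs
  imports "HOL-Probability.Probability"
begin

definition filtered_prob_space_usual ::
  "'a measure \<Rightarrow> (real \<Rightarrow> 'a measure) \<Rightarrow> real \<Rightarrow> bool" where
  "filtered_prob_space_usual M F T \<longleftrightarrow>
     prob_space M \<and> 0 < T \<and>
     (\<forall>t\<in>{0..T}. space (F t) = space M \<and> sets (F t) \<subseteq> sets M) \<and>
     (\<forall>s t. 0 \<le> s \<longrightarrow> s \<le> t \<longrightarrow> t \<le> T \<longrightarrow> sets (F s) \<subseteq> sets (F t)) \<and>
     (\<forall>N\<in>null_sets M. \<forall>A. A \<subseteq> N \<longrightarrow> A \<in> sets (F 0)) \<and>
     (\<forall>t\<in>{0..<T}. sets (F t) = (\<Inter>s\<in>{t<..T}. sets (F s)))"

definition stopping_times0 ::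
  "'a measure \<Rightarrow> (real \<Rightarrow> 'a measure) \<Rightarrow> real \<Rightarrow> ('a \<Rightarrow> real) set" where
  "stopping_times0 M F T =
     {\<tau>. (\<forall>\<omega>\<in>space M. \<tau> \<omega> \<in> {0..T}) \<and>
          (\<forall>t\<in>{0..T}. {\<omega>\<in>space M. \<tau> \<omega> \<le> t} \<in> sets (F t))}"

definition brownian_motion ::
  "'a measure \<Rightarrow> (real \<Rightarrow> 'a measure) \<Rightarrow> real \<Rightarrow> (real \<Rightarrow> 'a \<Rightarrow> real) \<Rightarrow> bool" where
  "brownian_motion M F T W \<longleftrightarrow>
     (\<forall>t\<in>{0..T}. W t \<in> borel_measurable (F t)) \<and>
     (\<forall>\<omega>\<in>space M. W 0 \<omega> = 0) \<and>
     (\<forall>\<omega>\<in>space M. continuous_on {0..T} (\<lambda>t. W t \<omega>)) \<and>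
     (\<forall>s t. 0 \<le> s \<longrightarrow> s < t \<longrightarrow> t \<le> T \<longrightarrow>
        distributed M lborel (\<lambda>\<omega>. W t \<omega> - W s \<omega>) (\<lambda>x. ennreal (normal_density 0 (sqrt (t - s)) x)) \<and>
        (\<forall>A\<in>sets (F s). \<forall>B\<in>sets borel.
           measure M ({\<omega>\<in>space M. W t \<omega> - W s \<omega> \<in> B} \<inter> A) =
           measure M {\<omega>\<in>space M. W t \<omega> - W s \<omega> \<in> B} * measure M A))"

definition payoff ::
  "(real \<Rightarrow> 'a \<Rightarrow> real) \<Rightarrow> (real \<Rightarrow> 'a \<Rightarrow> real) \<Rightarrow> ('a \<Rightarrow> real) \<Rightarrow> ('a \<Rightarrow> real) \<Rightarrow> 'a \<Rightarrow> real" where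
  "payoff X Y \<tau> \<sigma> \<omega> = (if \<tau> \<omega> \<le> \<sigma> \<omega> then X (\<tau> \<omega>) \<omega> else Y (\<sigma> \<omega>) \<omega>)"

text \<open>Utilities without hedging instruments (S = 1, C_A = C_B = 0).\<close>
definition uA :: "'a measure \<Rightarrow> real \<Rightarrow> (real \<Rightarrow> 'a \<Rightarrow> real) \<Rightarrow> (real \<Rightarrow> 'a \<Rightarrow> real)
    \<Rightarrow> ('a \<Rightarrow> real) \<Rightarrow> ('a \<Rightarrow> real) \<Rightarrow> real" where
  "uA M \<alpha>A X Y \<tau> \<sigma> = (\<integral>\<omega>. - exp (\<alpha>A * payoff X Y \<tau> \<sigma> \<omega>) \<partial>M)"

definition uB :: "'a measure \<Rightarrow> real \<Rightarrow> (real \<Rightarrow> 'a \<Rightarrow> real) \<Rightarrow> (real \<Rightarrow> 'a \<Rightarrow> real)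
    \<Rightarrow> ('a \<Rightarrow> real) \<Rightarrow> ('a \<Rightarrow> real) \<Rightarrow> real" where
  "uB M \<alpha>B X Y \<tau> \<sigma> = (\<integral>\<omega>. - exp (- \<alpha>B * payoff X Y \<tau> \<sigma> \<omega>) \<partial>M)"

definition nash_equilibrium ::
  "'a measure \<Rightarrow> (real \<Rightarrow> 'a measure) \<Rightarrow> real \<Rightarrow> real \<Rightarrow> real \<Rightarrow>
   (real \<Rightarrow> 'a \<Rightarrow> real) \<Rightarrow> (real \<Rightarrow> 'a \<Rightarrow> real) \<Rightarrow> ('a \<Rightarrow> real) \<Rightarrow> ('a \<Rightarrow> real) \<Rightarrow> bool" where
  "nash_equilibrium M F T \<alpha>A \<alpha>B X Y \<tau>s \<sigma>s \<longleftrightarrow>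
     \<tau>s \<in> stopping_times0 M F T \<and> \<sigma>s \<in> stopping_times0 M F T \<and>
     (\<forall>\<sigma>\<in>stopping_times0 M F T. uA M \<alpha>A X Y \<tau>s \<sigma>s \<ge> uA M \<alpha>A X Y \<tau>s \<sigma>) \<and>
     (\<forall>\<tau>\<in>stopping_times0 M F T. uB M \<alpha>B X Y \<tau>s \<sigma>s \<ge> uB M \<alpha>B X Y \<tau> \<sigma>s)"

end

theory Submission
  imports Defs
begin


lemma (in prob_space) ui_limit:
  fixes X :: "nat \<Rightarrow> 'a \<Rightarrow> real" and Y :: "'a \<Rightarrow> real"
  assumes meas: "\<And>n. X n \<in> borel_measurable M"
    and nonneg: "\<And>n \<omega>. \<omega> \<in> space M \<Longrightarrow> 0 \<le> X n \<omega>"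
    and lim: "\<And>\<omega>. \<omega> \<in> space M \<Longrightarrow> (\<lambda>n. X n \<omega>) \<longlonglongrightarrow> Y \<omega>"
    and int1: "\<And>n. integrable M (X n)" and e1: "\<And>n. expectation (X n) = 1"
    and int2: "\<And>n. integrable M (\<lambda>\<omega>. (X n \<omega>)^2)" and e2: "\<And>n. expectation (\<lambda>\<omega>. (X n \<omega>)^2) \<le> C"
  shows "integrable M Y \<and> expectation Y \<ge> 1"
proof -
  have Ym: "Y \<in> borel_measurable M"
    using borel_measurable_LIMSEQ_real[OF lim meas] .
  have Ynn: "\<And>\<omega>. \<omega> \<in> space M \<Longrightarrow> 0 \<le> Y \<omega>"
    using lim nonneg by (meson LIMSEQ_le_const)
  have "(\<integral>\<^sup>+ \<omega>. ennreal (Y \<omega>) \<partial>M) = (\<integral>\<^sup>+ \<omega>. liminf (\<lambda>n. ennreal (X n \<omega>)) \<partial>M)"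
  proof (rule nn_integral_cong)
    fix \<omega> assume w: "\<omega> \<in> space M"
    have "(\<lambda>n. ennreal (X n \<omega>)) \<longlonglongrightarrow> ennreal (Y \<omega>)"
      using lim[OF w] by (rule tendsto_ennrealI)
    then show "ennreal (Y \<omega>) = liminf (\<lambda>n. ennreal (X n \<omega>))"
      by (simp add: lim_imp_Liminf)
  qed
  also have "\<dots> \<le> liminf (\<lambda>n. \<integral>\<^sup>+ \<omega>. ennreal (X n \<omega>) \<partial>M)"
    by (rule nn_integral_liminf) (use meas in auto)
  also have "(\<lambda>n. \<integral>\<^sup>+ \<omega>. ennreal (X n \<omega>) \<partial>M) = (\<lambda>n. 1)"
  proof
    fix n
    show "(\<integral>\<^sup>+ \<omega>. ennreal (X n \<omega>) \<partial>M) = 1"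
      using nn_integral_eq_integral[OF int1[of n]] nonneg e1[of n] by (simp add: AE_I2)
  qed
  finally have "(\<integral>\<^sup>+ \<omega>. ennreal (Y \<omega>) \<partial>M) \<le> 1" by (simp add: Liminf_const)
  then have intY: "integrable M Y"
    using Ym Ynn by (intro integrableI_nonneg) (auto simp: AE_I2 ennreal_le_1 top.not_eq_extremum le_less_trans[of _ 1])
  have ge: "expectation Y \<ge> 1 - C / K" if K: "K > 0" for K
  proof -
    have "\<And>n. 1 \<le> expectation (\<lambda>\<omega>. min (X n \<omega>) K) + C / K"
    proof -
      fix n
      have pt: "X n \<omega> \<le> min (X n \<omega>) K + (X n \<omega>)^2 / K" if "\<omega> \<in> space M" for \<omega>
      proof (cases "X n \<omega> \<le> K")
        case True then show ?thesis using nonneg[OF that] K by (simp add: min_def)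
      next
        case False
        then have "X n \<omega> * K \<le> X n \<omega> * X n \<omega>" using K nonneg[OF that]
          by (intro mult_left_mono) auto
        then have "X n \<omega> \<le> (X n \<omega>)^2 / K" using K by (simp add: field_simps power2_eq_square)
        then show ?thesis using False K by (simp add: min_def)
      qed
      have imin: "integrable M (\<lambda>\<omega>. min (X n \<omega>) K)"
        by (rule Bochner_Integration.integrable_bound[OF int1[of n]]) (use meas nonneg K in \<open>auto intro!: AE_I2\<close>)
      have "1 = expectation (X n)" using e1 by simp
      also have "\<dots> \<le> expectation (\<lambda>\<omega>. min (X n \<omega>) K + (X n \<omega>)^2 / K)"
        by (rule integral_mono) (use imin int2 pt int1 in auto)
      also have "\<dots> = expectation (\<lambda>\<omega>. min (X n \<omega>) K) + expectation (\<lambda>\<omega>. (X n \<omega>)^2) / K"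
        using imin int2[of n] by simp
      also have "\<dots> \<le> expectation (\<lambda>\<omega>. min (X n \<omega>) K) + C / K"
        using e2[of n] K by (simp add: divide_right_mono)
      finally show "1 \<le> expectation (\<lambda>\<omega>. min (X n \<omega>) K) + C / K" .
    qed
    moreover have "(\<lambda>n. expectation (\<lambda>\<omega>. min (X n \<omega>) K)) \<longlonglongrightarrow> expectation (\<lambda>\<omega>. min (Y \<omega>) K)"
      by (rule integral_dominated_convergence[where w="\<lambda>_. K"])
         (use meas Ym lim nonneg K in \<open>auto intro!: AE_I2 tendsto_min\<close>)
    ultimately have "1 \<le> expectation (\<lambda>\<omega>. min (Y \<omega>) K) + C / K"
      by (intro LIMSEQ_le_const[where X="\<lambda>n. expectation (\<lambda>\<omega>. min (X n \<omega>) K) + C / K"])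
         (auto intro!: tendsto_add)
    moreover have "expectation (\<lambda>\<omega>. min (Y \<omega>) K) \<le> expectation Y"
      by (rule integral_mono) (use intY Ym Ynn K in \<open>auto intro!: Bochner_Integration.integrable_bound[OF intY] AE_I2\<close>)
    ultimately show ?thesis by simp
  qed
  have "expectation Y \<ge> 1"
  proof (rule ccontr)
    assume "\<not> 1 \<le> expectation Y"
    then have d: "1 - expectation Y > 0" by simp
    define K where "K = (\<bar>C\<bar> + 1) * 2 / (1 - expectation Y)"
    have Kp: "K > 0" using d by (simp add: K_def)
    have "C / K \<le> (\<bar>C\<bar> + 1) / K" using Kp by (simp add: divide_right_mono)
    also have "\<dots> = (1 - expectation Y) / 2" using d by (simp add: K_def field_simps)
    finally have "C / K \<le> (1 - expectation Y) / 2" .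
    moreover have "(1 - expectation Y) / 2 < 1 - expectation Y" using d by simp
    ultimately have "C / K < 1 - expectation Y" by (rule le_less_trans)
    with ge[OF Kp] show False by simp
  qed
  with intY show ?thesis by simp
qed



lemma meas_sub:
  assumes "space N = space M" "sets N \<subseteq> sets M" "f \<in> measurable N K"
  shows "f \<in> measurable M K"
  using assms by (auto simp: measurable_def)

definition expZ :: "(real \<Rightarrow> 'a \<Rightarrow> real) \<Rightarrow> real \<Rightarrow> real \<Rightarrow> 'a \<Rightarrow> real" where
  "expZ W l t \<omega> = exp (l * W t \<omega> - l^2 * t / 2)"

definition jdx :: "real \<Rightarrow> nat \<Rightarrow> ('a \<Rightarrow> real) \<Rightarrow> 'a \<Rightarrow> nat" where
  "jdx T n \<tau> \<omega> = nat \<lceil>\<tau> \<omega> * real (Suc n) / T\<rceil>"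

definition tauN :: "real \<Rightarrow> nat \<Rightarrow> ('a \<Rightarrow> real) \<Rightarrow> 'a \<Rightarrow> real" where
  "tauN T n \<tau> \<omega> = real (jdx T n \<tau> \<omega>) * T / real (Suc n)"

locale bmset =
  fixes M :: "'a measure" and F :: "real \<Rightarrow> 'a measure" and T :: real and W :: "real \<Rightarrow> 'a \<Rightarrow> real"
  assumes fps: "filtered_prob_space_usual M F T" and bm: "brownian_motion M F T W"
begin

sublocale prob_space M using fps by (simp add: filtered_prob_space_usual_def)

lemma T_pos: "0 < T" using fps by (simp add: filtered_prob_space_usual_def)

lemma F_space: "t \<in> {0..T} \<Longrightarrow> space (F t) = space M"
  using fps by (simp add: filtered_prob_space_usual_def)
lemma F_sets: "t \<in> {0..T} \<Longrightarrow> sets (F t) \<subseteq> sets M"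
  using fps by (simp add: filtered_prob_space_usual_def)

lemma W_F: "t \<in> {0..T} \<Longrightarrow> W t \<in> borel_measurable (F t)"
  using bm by (simp add: brownian_motion_def)
lemma W_M[measurable]: "t \<in> {0..T} \<Longrightarrow> W t \<in> borel_measurable M"
  using meas_sub[OF F_space F_sets W_F] .
lemma W0: "\<omega> \<in> space M \<Longrightarrow> W 0 \<omega> = 0"
  using bm by (simp add: brownian_motion_def)
lemma W_cont: "\<omega> \<in> space M \<Longrightarrow> continuous_on {0..T} (\<lambda>t. W t \<omega>)"
  using bm by (simp add: brownian_motion_def)
lemma W_dist: "0 \<le> s \<Longrightarrow> s < t \<Longrightarrow> t \<le> T \<Longrightarrow>
   distributed M lborel (\<lambda>\<omega>. W t \<omega> - W s \<omega>) (\<lambda>x. ennreal (normal_density 0 (sqrt (t - s)) x))"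
  using bm by (simp add: brownian_motion_def)
lemma W_ind: "0 \<le> s \<Longrightarrow> s < t \<Longrightarrow> t \<le> T \<Longrightarrow> A \<in> sets (F s) \<Longrightarrow> B \<in> sets borel \<Longrightarrow>
   measure M ({\<omega>\<in>space M. W t \<omega> - W s \<omega> \<in> B} \<inter> A) =
           measure M {\<omega>\<in>space M. W t \<omega> - W s \<omega> \<in> B} * measure M A"
  using bm by (simp add: brownian_motion_def)

lemma st_meas:
  assumes "\<tau> \<in> stopping_times0 M F T"
  shows "\<tau> \<in> borel_measurable M"
proof (subst borel_measurable_iff_le, intro allI)
  fix a
  show "{w \<in> space M. \<tau> w \<le> a} \<in> sets M"
  proof (cases "a < 0")
    case True
    then have "{w \<in> space M. \<tau> w \<le> a} = {}" using assms by (force simp: stopping_times0_def)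
    then show ?thesis by (metis sets.empty_sets)
  next
    case False
    show ?thesis
    proof (cases "a \<le> T")
      case True
      have "{w \<in> space M. \<tau> w \<le> a} \<in> sets (F a)" using assms True False by (auto simp: stopping_times0_def)
      then show ?thesis using True False F_sets[of a] by auto
    next
      case f2: False
      then have "{w \<in> space M. \<tau> w \<le> a} = space M" using assms by (force simp: stopping_times0_def)
      then show ?thesis by (metis sets.top)
    qed
  qed
qed

lemma st_range: "\<tau> \<in> stopping_times0 M F T \<Longrightarrow> \<omega> \<in> space M \<Longrightarrow> 0 \<le> \<tau> \<omega> \<and> \<tau> \<omega> \<le> T"
  by (auto simp: stopping_times0_def)

lemma st_F: "\<tau> \<in> stopping_times0 M F T \<Longrightarrow> t \<in> {0..T} \<Longrightarrow> {\<omega>\<in>space M. \<tau> \<omega> \<le> t} \<in> sets (F t)"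
  by (auto simp: stopping_times0_def)

lemma normal_mgf:
  assumes "s > 0"
  shows "integrable lborel (\<lambda>x. normal_density 0 s x * exp (l * x))"
    and "(\<integral>x. normal_density 0 s x * exp (l * x) \<partial>lborel) = exp (l^2 * s^2 / 2)"
proof -
  have eq: "normal_density 0 s x * exp (l * x) = exp (l^2 * s^2 / 2) * normal_density (l * s^2) s x" for x
  proof -
    have "-(x - 0)\<^sup>2/ (2 * s\<^sup>2) + l * x = l^2 * s^2 / 2 + (-(x - l * s^2)\<^sup>2/ (2 * s\<^sup>2))"
      using assms by (simp add: field_simps power2_eq_square)
    then show ?thesis
      unfolding normal_density_def by (simp add: exp_add[symmetric] mult_ac)
  qed
  show "integrable lborel (\<lambda>x. normal_density 0 s x * exp (l * x))"
    unfolding eq by (rule integrable_mult_right) (rule integrable_normal_density[OF assms])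
  show "(\<integral>x. normal_density 0 s x * exp (l * x) \<partial>lborel) = exp (l^2 * s^2 / 2)"
    unfolding eq using integral_normal_density[OF assms] by simp
qed

lemma incr_mgf:
  assumes "0 \<le> s" "s < t" "t \<le> T"
  shows "integrable M (\<lambda>\<omega>. exp (l * (W t \<omega> - W s \<omega>)))"
    and "expectation (\<lambda>\<omega>. exp (l * (W t \<omega> - W s \<omega>))) = exp (l^2 * (t - s) / 2)"
proof -
  note D = W_dist[OF assms]
  have sp: "sqrt (t - s) > 0" using assms by simp
  show "integrable M (\<lambda>\<omega>. exp (l * (W t \<omega> - W s \<omega>)))"
    using distributed_integrable[OF D, of "\<lambda>x. exp (l * x)"] normal_mgf(1)[OF sp, of l] by simp
  have "expectation (\<lambda>\<omega>. exp (l * (W t \<omega> - W s \<omega>))) = (\<integral>x. normal_density 0 (sqrt (t - s)) x * exp (l * x) \<partial>lborel)"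
    using distributed_integral[OF D, of "\<lambda>x. exp (l * x)"] by simp
  also have "\<dots> = exp (l^2 * (t - s) / 2)"
    using normal_mgf(2)[OF sp, of l] assms by simp
  finally show "expectation (\<lambda>\<omega>. exp (l * (W t \<omega> - W s \<omega>))) = exp (l^2 * (t - s) / 2)" .
qed


lemma Int_stable_vimage: "Int_stable {f -` A \<inter> space M | A. A \<in> sets (borel :: real measure)}"
  unfolding Int_stable_def
proof (safe)
  fix A B :: "real set" assume "A \<in> sets borel" "B \<in> sets borel"
  then show "\<exists>C. f -` A \<inter> space M \<inter> (f -` B \<inter> space M) = f -` C \<inter> space M \<and> C \<in> sets borel"
    by (intro exI[of _ "A \<inter> B"]) auto
qed

lemma indep_incr:
  fixes h :: "'a \<Rightarrow> real" and g :: "real \<Rightarrow> real"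
  assumes st: "0 \<le> s" "s < t" "t \<le> T" and h: "h \<in> borel_measurable (F s)"
    and g: "g \<in> borel_measurable (borel :: real measure)"
  shows "indep_var borel h borel (\<lambda>\<omega>. g (W t \<omega> - W s \<omega>))"
proof -
  have sT: "s \<in> {0..T}" "t \<in> {0..T}" using st by auto
  have hM: "h \<in> borel_measurable M" using meas_sub[OF F_space[OF sT(1)] F_sets[OF sT(1)] h] .
  have gM: "(\<lambda>\<omega>. g (W t \<omega> - W s \<omega>)) \<in> borel_measurable M"
    using sT g by measurable
  let ?A = "{h -` A \<inter> space M | A. A \<in> sets (borel :: real measure)}"
  let ?B = "{(\<lambda>\<omega>. g (W t \<omega> - W s \<omega>)) -` A \<inter> space M | A. A \<in> sets (borel :: real measure)}"
  have "indep_set ?A ?B"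
  proof (rule indep_setI)
    show "?A \<subseteq> events" using hM by (auto intro: measurable_sets)
    show "?B \<subseteq> events" using gM by (auto intro: measurable_sets)
    fix a b assume a: "a \<in> ?A" and b: "b \<in> ?B"
    from a obtain A where A: "A \<in> sets borel" "a = h -` A \<inter> space M" by auto
    from b obtain B where B: "B \<in> sets borel" "b = (\<lambda>\<omega>. g (W t \<omega> - W s \<omega>)) -` B \<inter> space M" by auto
    have aF: "a \<in> sets (F s)"
      using measurable_sets[OF h A(1)] A(2) F_space[OF sT(1)] by simp
    have gB: "g -` B \<in> sets borel"
      using measurable_sets[OF g B(1)] by simp
    have bb: "b = {\<omega>\<in>space M. W t \<omega> - W s \<omega> \<in> g -` B}" using B(2) by auto
    have "prob (a \<inter> b) = prob (b \<inter> a)" by (simp add: Int_commute)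
    also have "\<dots> = prob b * prob a"
      unfolding bb by (rule W_ind[OF st aF gB])
    finally show "prob (a \<inter> b) = prob a * prob b" by simp
  qed
  then have "indep_set (sigma_sets (space M) ?A) (sigma_sets (space M) ?B)"
    by (intro indep_set_sigma_sets Int_stable_vimage)
  then show ?thesis
    using hM gM by (simp add: indep_var_eq)
qed

lemma indep_prod:
  fixes h :: "'a \<Rightarrow> real"
  assumes st: "0 \<le> s" "s < t" "t \<le> T" and h: "h \<in> borel_measurable (F s)" and hi: "integrable M h"
  shows "integrable M (\<lambda>\<omega>. h \<omega> * exp (l * (W t \<omega> - W s \<omega>)))"
    and "expectation (\<lambda>\<omega>. h \<omega> * exp (l * (W t \<omega> - W s \<omega>))) = expectation h * exp (l^2 * (t - s) / 2)"
proof -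
  have I: "indep_var borel h borel (\<lambda>\<omega>. exp (l * (W t \<omega> - W s \<omega>)))"
    using indep_incr[OF st h, of "\<lambda>x. exp (l * x)"] by simp
  show "integrable M (\<lambda>\<omega>. h \<omega> * exp (l * (W t \<omega> - W s \<omega>)))"
    by (rule indep_var_integrable[OF I hi incr_mgf(1)[OF st]])
  show "expectation (\<lambda>\<omega>. h \<omega> * exp (l * (W t \<omega> - W s \<omega>))) = expectation h * exp (l^2 * (t - s) / 2)"
    using indep_var_lebesgue_integral[OF I hi incr_mgf(1)[OF st]] incr_mgf(2)[OF st] by simp
qed


lemma Z_F: "t \<in> {0..T} \<Longrightarrow> expZ W l t \<in> borel_measurable (F t)"
  unfolding expZ_def using W_F[of t] by measurable

lemma Z_M[measurable]: "t \<in> {0..T} \<Longrightarrow> expZ W l t \<in> borel_measurable M"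
  unfolding expZ_def by measurable

lemma Z_pos: "expZ W l t \<omega> > 0" by (simp add: expZ_def)
lemma Z_abs[simp]: "\<bar>expZ W l t \<omega>\<bar> = expZ W l t \<omega>" using Z_pos[of l t \<omega>] by simp

lemma Z_split:
  "expZ W l t \<omega> = expZ W l s \<omega> * exp (l * (W t \<omega> - W s \<omega>)) * exp (- (l^2 * (t - s) / 2))"
proof -
  have "l * W t \<omega> - l^2 * t / 2 = (l * W s \<omega> - l^2 * s / 2) + l * (W t \<omega> - W s \<omega>) + (- (l^2 * (t - s) / 2))"
    by (simp add: field_simps)
  then show ?thesis unfolding expZ_def by (simp add: exp_add[symmetric])
qed

lemma Z_int:
  assumes "t \<in> {0..T}"
  shows "integrable M (expZ W l t)" and "expectation (expZ W l t) = 1"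
proof -
  have "integrable M (expZ W l t) \<and> expectation (expZ W l t) = 1"
  proof (cases "t = 0")
    case True
    have e: "\<And>\<omega>. \<omega> \<in> space M \<Longrightarrow> expZ W l t \<omega> = 1" using W0 True by (simp add: expZ_def)
    have "integrable M (expZ W l t)" by (subst Bochner_Integration.integrable_cong[OF refl e]) auto
    moreover have "expectation (expZ W l t) = 1" by (subst Bochner_Integration.integral_cong[OF refl e]) (auto simp: prob_space)
    ultimately show ?thesis by simp
  next
    case False
    then have st: "(0::real) \<le> 0" "0 < t" "t \<le> T" using assms by auto
    have e: "\<And>\<omega>. \<omega> \<in> space M \<Longrightarrow> expZ W l t \<omega> = exp (l * (W t \<omega> - W 0 \<omega>)) * exp (- (l^2 * t / 2))"
      using W0 by (simp add: expZ_def flip: exp_add)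
    have "integrable M (expZ W l t)" by (subst Bochner_Integration.integrable_cong[OF refl e]) (use incr_mgf(1)[OF st] in auto)
    moreover have "expectation (expZ W l t) = 1" 
    proof -
      have "expectation (expZ W l t) = expectation (\<lambda>x. exp (l * (W t x - W 0 x)) * exp (- (l\<^sup>2 * t / 2)))"
        by (rule Bochner_Integration.integral_cong[OF refl e])
      also have "\<dots> = expectation (\<lambda>x. exp (l * (W t x - W 0 x))) * exp (- (l\<^sup>2 * t / 2))"
        by (rule integral_mult_left_zero)
      also have "\<dots> = exp (l\<^sup>2 * (t - 0) / 2) * exp (- (l\<^sup>2 * t / 2))"
        by (simp only: incr_mgf(2)[OF st])
      also have "\<dots> = 1" by (simp flip: exp_add)
      finally show ?thesis .
    qed
    ultimately show ?thesis by simp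
  qed
  then show "integrable M (expZ W l t)" and "expectation (expZ W l t) = 1" by auto
qed

lemma Z_step:
  assumes st: "0 \<le> s" "s < t" "t \<le> T" and A: "A \<in> sets (F s)"
  shows "expectation (\<lambda>\<omega>. (expZ W l t \<omega> - expZ W l s \<omega>) * indicator A \<omega>) = 0"
proof -
  have sT: "s \<in> {0..T}" "t \<in> {0..T}" using st by auto
  have AM: "A \<in> sets M" using A F_sets[OF sT(1)] by auto
  define h where "h \<omega> = expZ W l s \<omega> * indicator A \<omega>" for \<omega>
  have hF: "h \<in> borel_measurable (F s)" unfolding h_def using Z_F[OF sT(1)] A by measurable
  have hi: "integrable M h" unfolding h_def by (rule integrable_real_mult_indicator[OF AM Z_int(1)[OF sT(1)]])
  have ti: "integrable M (\<lambda>\<omega>. expZ W l t \<omega> * indicator A \<omega>)"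
    by (rule integrable_real_mult_indicator[OF AM Z_int(1)[OF sT(2)]])
  have e: "expZ W l t \<omega> * indicator A \<omega> = (h \<omega> * exp (l * (W t \<omega> - W s \<omega>))) * exp (- (l^2 * (t - s) / 2))" for \<omega>
    unfolding h_def by (subst Z_split[of _ _ _ s]) (simp add: mult_ac)
  have "expectation (\<lambda>\<omega>. expZ W l t \<omega> * indicator A \<omega>) = expectation h"
    unfolding e using indep_prod[OF st hF hi, of l] by (simp add: exp_minus field_simps)
  then have "expectation (\<lambda>\<omega>. expZ W l t \<omega> * indicator A \<omega> - h \<omega>) = 0"
    using ti hi by simp
  then show ?thesis unfolding h_def by (simp add: algebra_simps)
qed


lemma jdx_le_iff:
  assumes "\<tau> \<in> stopping_times0 M F T" "\<omega> \<in> space M"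
  shows "jdx T n \<tau> \<omega> \<le> k \<longleftrightarrow> \<tau> \<omega> \<le> real k * T / real (Suc n)"
proof -
  have "jdx T n \<tau> \<omega> \<le> k \<longleftrightarrow> \<lceil>\<tau> \<omega> * real (Suc n) / T\<rceil> \<le> int k"
    unfolding jdx_def by linarith
  also have "\<dots> \<longleftrightarrow> \<tau> \<omega> * real (Suc n) / T \<le> real k"
    by (simp add: ceiling_le_iff)
  also have "\<dots> \<longleftrightarrow> \<tau> \<omega> \<le> real k * T / real (Suc n)"
    using T_pos by (simp add: field_simps del: of_nat_Suc)
  finally show ?thesis .
qed

lemma jdx_le:
  assumes "\<tau> \<in> stopping_times0 M F T" "\<omega> \<in> space M"
  shows "jdx T n \<tau> \<omega> \<le> Suc n"
  using jdx_le_iff[OF assms, of n "Suc n"] st_range[OF assms] T_pos by simp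

lemma tauN_bounds:
  assumes "\<tau> \<in> stopping_times0 M F T" "\<omega> \<in> space M"
  shows "\<tau> \<omega> \<le> tauN T n \<tau> \<omega>" "tauN T n \<tau> \<omega> \<le> \<tau> \<omega> + T / real (Suc n)"
    "0 \<le> tauN T n \<tau> \<omega>" "tauN T n \<tau> \<omega> \<le> T"
proof -
  define x where "x = \<tau> \<omega> * real (Suc n) / T"
  have x0: "0 \<le> x" using st_range[OF assms] T_pos by (simp add: x_def)
  have j: "real (jdx T n \<tau> \<omega>) = of_int \<lceil>x\<rceil>" unfolding jdx_def x_def[symmetric]
    using x0 by simp
  have tn: "tauN T n \<tau> \<omega> = of_int \<lceil>x\<rceil> * T / real (Suc n)" unfolding tauN_def j ..
  have tx: "\<tau> \<omega> = x * T / real (Suc n)" using T_pos by (simp add: x_def field_simps del: of_nat_Suc)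
  have c1: "x \<le> of_int \<lceil>x\<rceil>" by (rule le_of_int_ceiling)
  have c2: "of_int \<lceil>x\<rceil> < x + 1" using ceiling_correct[of x] by linarith
  show "\<tau> \<omega> \<le> tauN T n \<tau> \<omega>" unfolding tn tx using c1 T_pos
    by (intro divide_right_mono mult_right_mono) auto
  have "tauN T n \<tau> \<omega> \<le> (x + 1) * T / real (Suc n)" unfolding tn using c2 T_pos
    by (intro divide_right_mono mult_right_mono) auto
  moreover have "(x + 1) * T / real (Suc n) = x * T / real (Suc n) + T / real (Suc n)"
    by (simp add: distrib_right add_divide_distrib)
  ultimately show "tauN T n \<tau> \<omega> \<le> \<tau> \<omega> + T / real (Suc n)" using tx by linarith
  show "0 \<le> tauN T n \<tau> \<omega>" unfolding tauN_def using T_pos by simp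
  have "real (jdx T n \<tau> \<omega>) \<le> real (Suc n)" using jdx_le[OF assms, of n] by linarith
  then have "real (jdx T n \<tau> \<omega>) * T \<le> real (Suc n) * T" using T_pos by (intro mult_right_mono) auto
  then show "tauN T n \<tau> \<omega> \<le> T" unfolding tauN_def by (simp add: field_simps del: of_nat_Suc)
qed

lemma tauN_lim:
  assumes "\<tau> \<in> stopping_times0 M F T" "\<omega> \<in> space M"
  shows "(\<lambda>n. tauN T n \<tau> \<omega>) \<longlonglongrightarrow> \<tau> \<omega>"
proof (rule tendsto_sandwich[of "\<lambda>_. \<tau> \<omega>" _ _ "\<lambda>n. \<tau> \<omega> + T * inverse (real (Suc n))"])
  show "\<forall>\<^sub>F n in sequentially. \<tau> \<omega> \<le> tauN T n \<tau> \<omega>" using tauN_bounds(1)[OF assms] by simp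
  show "\<forall>\<^sub>F n in sequentially. tauN T n \<tau> \<omega> \<le> \<tau> \<omega> + T * inverse (real (Suc n))"
    using tauN_bounds(2)[OF assms] by (simp add: divide_inverse)
  show "(\<lambda>n. \<tau> \<omega>) \<longlonglongrightarrow> \<tau> \<omega>" by simp
  have "(\<lambda>n. \<tau> \<omega> + T * inverse (real (Suc n))) \<longlonglongrightarrow> \<tau> \<omega> + T * 0"
    by (intro tendsto_intros LIMSEQ_inverse_real_of_nat)
  then show "(\<lambda>n. \<tau> \<omega> + T * inverse (real (Suc n))) \<longlonglongrightarrow> \<tau> \<omega>" by simp
qed

lemma tauN_repr:
  assumes "\<tau> \<in> stopping_times0 M F T" "\<omega> \<in> space M"
  shows "expZ W l (tauN T n \<tau> \<omega>) \<omega> = expZ W l T \<omega> -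
     (\<Sum>k<Suc n. (expZ W l (real (Suc k) * T / real (Suc n)) \<omega> - expZ W l (real k * T / real (Suc n)) \<omega>)
        * indicator {\<omega>\<in>space M. \<tau> \<omega> \<le> real k * T / real (Suc n)} \<omega>)"
proof -
  define g where "g k = expZ W l (real k * T / real (Suc n)) \<omega>" for k
  define j where "j = jdx T n \<tau> \<omega>"
  have jle: "j \<le> Suc n" unfolding j_def by (rule jdx_le[OF assms])
  have "(\<Sum>k<Suc n. (expZ W l (real (Suc k) * T / real (Suc n)) \<omega> - expZ W l (real k * T / real (Suc n)) \<omega>)
        * indicator {\<omega>\<in>space M. \<tau> \<omega> \<le> real k * T / real (Suc n)} \<omega>)
      = (\<Sum>k<Suc n. if j \<le> k then g (Suc k) - g k else 0)"
    by (intro sum.cong refl) (use assms jdx_le_iff[OF assms] in \<open>auto simp: g_def j_def indicator_def simp del: of_nat_Suc\<close>)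
  also have "\<dots> = (\<Sum>k\<in>{k\<in>{..<Suc n}. j \<le> k}. g (Suc k) - g k)"
    by (rule sum.inter_filter[symmetric]) simp
  also have "{k\<in>{..<Suc n}. j \<le> k} = {j..<Suc n}" by auto
  also have "(\<Sum>k\<in>{j..<Suc n}. g (Suc k) - g k) = g (Suc n) - g j"
    by (rule sum_Suc_diff'[OF jle])
  finally have "expZ W l T \<omega> - (\<Sum>k<Suc n. (expZ W l (real (Suc k) * T / real (Suc n)) \<omega> - expZ W l (real k * T / real (Suc n)) \<omega>)
        * indicator {\<omega>\<in>space M. \<tau> \<omega> \<le> real k * T / real (Suc n)} \<omega>) = expZ W l T \<omega> - (g (Suc n) - g j)"
    by simp
  also have "\<dots> = g j" unfolding g_def by (simp del: of_nat_Suc)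
  also have "\<dots> = expZ W l (tauN T n \<tau> \<omega>) \<omega>" unfolding g_def j_def tauN_def ..
  finally show ?thesis by simp
qed

lemma tauN_int:
  assumes "\<tau> \<in> stopping_times0 M F T"
  shows "integrable M (\<lambda>\<omega>. expZ W l (tauN T n \<tau> \<omega>) \<omega>)"
    and "expectation (\<lambda>\<omega>. expZ W l (tauN T n \<tau> \<omega>) \<omega>) = 1"
proof -
  define t where "t k = real k * T / real (Suc n)" for k
  define A where "A k = {\<omega>\<in>space M. \<tau> \<omega> \<le> t k}" for k
  have tk: "k \<le> Suc n \<Longrightarrow> t k \<in> {0..T}" for k
    using T_pos by (auto simp: t_def field_simps simp del: of_nat_Suc)
  have tlt: "t k < t (Suc k)" for k using T_pos by (simp add: t_def divide_strict_right_mono del: of_nat_Suc)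
  have tT: "t (Suc n) = T" by (simp add: t_def del: of_nat_Suc)
  have AF: "k \<le> Suc n \<Longrightarrow> A k \<in> sets (F (t k))" for k unfolding A_def using st_F[OF assms tk] .
  have AM: "k \<le> Suc n \<Longrightarrow> A k \<in> sets M" for k using AF F_sets tk by blast
  define D where "D k \<omega> = (expZ W l (t (Suc k)) \<omega> - expZ W l (t k) \<omega>) * indicator (A k) \<omega>" for k \<omega>
  have Di: "k < Suc n \<Longrightarrow> integrable M (D k)" for k
    unfolding D_def using AM[of k] Z_int(1)[OF tk[of k]] Z_int(1)[OF tk[of "Suc k"]]
    by (intro integrable_real_mult_indicator integrable_diff) auto
  have De: "k < Suc n \<Longrightarrow> expectation (D k) = 0" for k
    unfolding D_def using Z_step[of "t k" "t (Suc k)" "A k" l] tk[of k] tk[of "Suc k"] tlt[of k] AF[of k] by auto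
  have e: "\<And>\<omega>. \<omega> \<in> space M \<Longrightarrow> expZ W l (tauN T n \<tau> \<omega>) \<omega> = expZ W l T \<omega> - (\<Sum>k<Suc n. D k \<omega>)"
    using tauN_repr[OF assms] unfolding D_def A_def t_def by simp
  have iT: "integrable M (expZ W l T)" using Z_int(1)[of T] T_pos by simp
  have iS: "integrable M (\<lambda>\<omega>. \<Sum>k<Suc n. D k \<omega>)" using Di by (intro Bochner_Integration.integrable_sum) auto
  show "integrable M (\<lambda>\<omega>. expZ W l (tauN T n \<tau> \<omega>) \<omega>)"
    by (subst Bochner_Integration.integrable_cong[OF refl e]) (use iT iS in auto)
  have "expectation (\<lambda>\<omega>. expZ W l (tauN T n \<tau> \<omega>) \<omega>) = expectation (\<lambda>\<omega>. expZ W l T \<omega> - (\<Sum>k<Suc n. D k \<omega>))"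
    by (rule Bochner_Integration.integral_cong[OF refl e])
  also have "\<dots> = expectation (expZ W l T) - (\<Sum>k<Suc n. expectation (D k))"
    by (subst Bochner_Integration.integral_diff[OF iT iS], subst Bochner_Integration.integral_sum) (use Di in auto)
  also have "\<dots> = 1" using De Z_int(2)[of T] T_pos by simp
  finally show "expectation (\<lambda>\<omega>. expZ W l (tauN T n \<tau> \<omega>) \<omega>) = 1" .
qed


lemma Z_sq: "(expZ W l t \<omega>)^2 = expZ W (2 * l) t \<omega> * exp (l^2 * t)"
proof -
  have "(expZ W l t \<omega>)^2 = exp (2 * (l * W t \<omega> - l^2 * t / 2))"
    unfolding expZ_def by (simp add: exp_of_nat_mult[symmetric] power2_eq_square exp_add[symmetric])
  also have "2 * (l * W t \<omega> - l^2 * t / 2) = (2 * l * W t \<omega> - (2 * l)^2 * t / 2) + l^2 * t"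
    by (simp add: power2_eq_square field_simps)
  also have "exp \<dots> = expZ W (2 * l) t \<omega> * exp (l^2 * t)" unfolding expZ_def by (rule exp_add)
  finally show ?thesis .
qed

lemma OST:
  assumes \<tau>: "\<tau> \<in> stopping_times0 M F T"
  shows "integrable M (\<lambda>\<omega>. expZ W l (\<tau> \<omega>) \<omega>) \<and> expectation (\<lambda>\<omega>. expZ W l (\<tau> \<omega>) \<omega>) \<ge> 1"
proof (rule ui_limit[where X="\<lambda>n \<omega>. expZ W l (tauN T n \<tau> \<omega>) \<omega>" and C="exp (l^2 * T)"])
  fix n
  show i1: "integrable M (\<lambda>\<omega>. expZ W l (tauN T n \<tau> \<omega>) \<omega>)" by (rule tauN_int(1)[OF \<tau>])
  then show m1: "(\<lambda>\<omega>. expZ W l (tauN T n \<tau> \<omega>) \<omega>) \<in> borel_measurable M" by (rule borel_measurable_integrable)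
  show "expectation (\<lambda>\<omega>. expZ W l (tauN T n \<tau> \<omega>) \<omega>) = 1" by (rule tauN_int(2)[OF \<tau>])
  have i2: "integrable M (\<lambda>\<omega>. expZ W (2 * l) (tauN T n \<tau> \<omega>) \<omega> * exp (l^2 * T))"
    using tauN_int(1)[OF \<tau>, of "2 * l" n] by simp
  have bd: "(expZ W l (tauN T n \<tau> \<omega>) \<omega>)^2 \<le> expZ W (2 * l) (tauN T n \<tau> \<omega>) \<omega> * exp (l^2 * T)"
    if "\<omega> \<in> space M" for \<omega>
    unfolding Z_sq using tauN_bounds(4)[OF \<tau> that, of n] Z_pos[of "2 * l"]
    by (intro mult_left_mono) (auto intro: mult_left_mono less_imp_le)
  show "integrable M (\<lambda>\<omega>. (expZ W l (tauN T n \<tau> \<omega>) \<omega>)^2)"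
    by (rule Bochner_Integration.integrable_bound[OF i2]) (use m1 bd in \<open>auto intro!: AE_I2 simp: Z_pos less_imp_le\<close>)
  then have "expectation (\<lambda>\<omega>. (expZ W l (tauN T n \<tau> \<omega>) \<omega>)^2) \<le> expectation (\<lambda>\<omega>. expZ W (2 * l) (tauN T n \<tau> \<omega>) \<omega> * exp (l^2 * T))"
    using i2 bd by (intro integral_mono) auto
  also have "\<dots> = exp (l^2 * T)" using tauN_int(2)[OF \<tau>, of "2 * l" n] by simp
  finally show "expectation (\<lambda>\<omega>. (expZ W l (tauN T n \<tau> \<omega>) \<omega>)^2) \<le> exp (l^2 * T)" .
next
  fix n \<omega> assume "\<omega> \<in> space M"
  show "0 \<le> expZ W l (tauN T n \<tau> \<omega>) \<omega>" using Z_pos less_imp_le by blast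
next
  fix \<omega> assume w: "\<omega> \<in> space M"
  have lim: "(\<lambda>n. tauN T n \<tau> \<omega>) \<longlonglongrightarrow> \<tau> \<omega>" by (rule tauN_lim[OF \<tau> w])
  have "(\<lambda>n. W (tauN T n \<tau> \<omega>) \<omega>) \<longlonglongrightarrow> W (\<tau> \<omega>) \<omega>"
    by (rule continuous_on_tendsto_compose[OF W_cont[OF w] lim])
       (use st_range[OF \<tau> w] tauN_bounds(3,4)[OF \<tau> w] in auto)
  then show "(\<lambda>n. expZ W l (tauN T n \<tau> \<omega>) \<omega>) \<longlonglongrightarrow> expZ W l (\<tau> \<omega>) \<omega>"
    unfolding expZ_def by (auto intro!: tendsto_intros lim)
qed


lemma Z_rel: "exp (l * W t \<omega>) = expZ W l t \<omega> * exp (l^2 * t / 2)"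
  unfolding expZ_def by (simp flip: exp_add)

lemma Wtau_meas:
  assumes \<tau>: "\<tau> \<in> stopping_times0 M F T"
  shows "(\<lambda>\<omega>. W (\<tau> \<omega>) \<omega>) \<in> borel_measurable M"
proof -
  have m: "(\<lambda>\<omega>. expZ W 1 (\<tau> \<omega>) \<omega>) \<in> borel_measurable M"
    using OST[OF \<tau>, of 1] borel_measurable_integrable by blast
  have tm: "\<tau> \<in> borel_measurable M" by (rule st_meas[OF \<tau>])
  have "(\<lambda>\<omega>. ln (expZ W 1 (\<tau> \<omega>) \<omega>) + \<tau> \<omega> / 2) \<in> borel_measurable M"
    using m tm by measurable
  moreover have "ln (expZ W 1 (\<tau> \<omega>) \<omega>) + \<tau> \<omega> / 2 = W (\<tau> \<omega>) \<omega>" for \<omega>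
    by (simp add: expZ_def)
  ultimately show ?thesis by simp
qed

lemma const_st: "c \<in> {0..T} \<Longrightarrow> (\<lambda>_. c) \<in> stopping_times0 M F T"
  unfolding stopping_times0_def
proof (safe)
  fix t assume c: "c \<in> {0..T}" and t: "t \<in> {0..T}"
  show "{\<omega> \<in> space M. c \<le> t} \<in> sets (F t)"
  proof (cases "c \<le> t")
    case True
    then have "{\<omega> \<in> space M. c \<le> t} = space (F t)" using F_space[OF t] by simp
    then show ?thesis by simp
  next
    case False then show ?thesis by simp
  qed
qed

lemma bound_B:
  assumes \<tau>: "\<tau> \<in> stopping_times0 M F T" and aB: "0 < aB"
  shows "(\<integral>\<omega>. - exp (- aB * W (\<tau> \<omega>) \<omega>) \<partial>M) \<le> -1"
proof -
  let ?l = "- aB"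
  have O: "integrable M (\<lambda>\<omega>. expZ W ?l (\<tau> \<omega>) \<omega>)" "expectation (\<lambda>\<omega>. expZ W ?l (\<tau> \<omega>) \<omega>) \<ge> 1"
    using OST[OF \<tau>, of ?l] by auto
  have m: "(\<lambda>\<omega>. exp (- aB * W (\<tau> \<omega>) \<omega>)) \<in> borel_measurable M"
    using Wtau_meas[OF \<tau>] by measurable
  have lo: "expZ W ?l (\<tau> \<omega>) \<omega> \<le> exp (- aB * W (\<tau> \<omega>) \<omega>)" if w: "\<omega> \<in> space M" for \<omega>
  proof -
    have "expZ W ?l (\<tau> \<omega>) \<omega> \<le> expZ W ?l (\<tau> \<omega>) \<omega> * exp (?l^2 * \<tau> \<omega> / 2)"
      using st_range[OF \<tau> w] Z_pos[of ?l "\<tau> \<omega>" \<omega>] by (simp add: mult_le_cancel_left1)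
    then show ?thesis using Z_rel[of ?l "\<tau> \<omega>" \<omega>] by simp
  qed
  have up: "exp (- aB * W (\<tau> \<omega>) \<omega>) \<le> expZ W ?l (\<tau> \<omega>) \<omega> * exp (?l^2 * T / 2)" if w: "\<omega> \<in> space M" for \<omega>
    using Z_rel[of ?l "\<tau> \<omega>" \<omega>] st_range[OF \<tau> w] Z_pos[of ?l]
    by (auto intro!: mult_left_mono divide_right_mono mult_left_mono simp del: mult_minus_left)
  have i: "integrable M (\<lambda>\<omega>. exp (- aB * W (\<tau> \<omega>) \<omega>))"
    by (rule Bochner_Integration.integrable_bound[where f="\<lambda>\<omega>. expZ W ?l (\<tau> \<omega>) \<omega> * exp (?l^2 * T / 2)"])
       (use O(1) m up in \<open>auto intro!: AE_I2 simp: abs_mult\<close>)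
  have "1 \<le> expectation (\<lambda>\<omega>. exp (- aB * W (\<tau> \<omega>) \<omega>))"
    using O(2) integral_mono[OF O(1) i lo] by linarith
  then show ?thesis by simp
qed


lemma bound_A:
  assumes \<sigma>: "\<sigma> \<in> stopping_times0 M F T" and aA: "0 < aA" and d: "\<delta> < (aA / 2) * T" and d0: "0 < \<delta>"
  shows "(\<integral>\<omega>. - exp (aA * (if T \<le> \<sigma> \<omega> then W T \<omega> else W (\<sigma> \<omega>) \<omega> + \<delta>)) \<partial>M) \<le> - exp (aA * \<delta>)"
proof -
  let ?l = "aA"
  let ?f = "\<lambda>\<omega>. exp (aA * (if T \<le> \<sigma> \<omega> then W T \<omega> else W (\<sigma> \<omega>) \<omega> + \<delta>))"
  have O: "integrable M (\<lambda>\<omega>. expZ W ?l (\<sigma> \<omega>) \<omega>)" "expectation (\<lambda>\<omega>. expZ W ?l (\<sigma> \<omega>) \<omega>) \<ge> 1"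
    using OST[OF \<sigma>, of ?l] by auto
  have sm: "\<sigma> \<in> borel_measurable M" by (rule st_meas[OF \<sigma>])
  have wm: "(\<lambda>\<omega>. W (\<sigma> \<omega>) \<omega>) \<in> borel_measurable M" by (rule Wtau_meas[OF \<sigma>])
  have wT: "W T \<in> borel_measurable M" using T_pos by (intro W_M) auto
  have m: "?f \<in> borel_measurable M"
    using sm wm wT by measurable
  have dd: "aA * \<delta> \<le> aA^2 * T / 2"
  proof -
    have "aA * \<delta> \<le> aA * ((aA / 2) * T)" using aA d by (intro mult_left_mono) auto
    then show ?thesis by (simp add: power2_eq_square)
  qed
  have lo: "exp (aA * \<delta>) * expZ W ?l (\<sigma> \<omega>) \<omega> \<le> ?f \<omega>" if w: "\<omega> \<in> space M" for \<omega>
  proof (cases "T \<le> \<sigma> \<omega>")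
    case True
    then have sT: "\<sigma> \<omega> = T" using st_range[OF \<sigma> w] by simp
    have "exp (aA * \<delta>) * expZ W ?l (\<sigma> \<omega>) \<omega> \<le> exp (aA^2 * T / 2) * expZ W ?l T \<omega>"
      unfolding sT using dd Z_pos[of ?l T \<omega>] by (intro mult_right_mono) auto
    also have "\<dots> = exp (aA * W T \<omega>)" using Z_rel[of ?l T \<omega>] by simp
    finally show ?thesis using True by simp
  next
    case False
    have "exp (aA * \<delta>) * expZ W ?l (\<sigma> \<omega>) \<omega> \<le> exp (aA * \<delta>) * (expZ W ?l (\<sigma> \<omega>) \<omega> * exp (aA^2 * \<sigma> \<omega> / 2))"
      using st_range[OF \<sigma> w] Z_pos[of ?l "\<sigma> \<omega>" \<omega>] by (simp add: mult_le_cancel_left1)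
    also have "\<dots> = exp (aA * (W (\<sigma> \<omega>) \<omega> + \<delta>))"
      using Z_rel[of ?l "\<sigma> \<omega>" \<omega>] by (simp add: distrib_left exp_add)
    finally show ?thesis using False by simp
  qed
  have up: "?f \<omega> \<le> (exp (aA * \<delta>) * exp (aA^2 * T / 2)) * expZ W ?l (\<sigma> \<omega>) \<omega>" if w: "\<omega> \<in> space M" for \<omega>
  proof (cases "T \<le> \<sigma> \<omega>")
    case True
    then have sT: "\<sigma> \<omega> = T" using st_range[OF \<sigma> w] by simp
    have "?f \<omega> = exp (aA^2 * T / 2) * expZ W ?l T \<omega>" using True Z_rel[of ?l T \<omega>] by simp
    also have "\<dots> \<le> (exp (aA * \<delta>) * exp (aA^2 * T / 2)) * expZ W ?l T \<omega>"
      using aA d d0 Z_pos[of ?l T \<omega>] T_pos by (intro mult_right_mono) (auto simp: zero_less_mult_iff)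
    finally show ?thesis unfolding sT .
  next
    case False
    have "?f \<omega> = exp (aA * \<delta>) * (expZ W ?l (\<sigma> \<omega>) \<omega> * exp (aA^2 * \<sigma> \<omega> / 2))"
      using False Z_rel[of ?l "\<sigma> \<omega>" \<omega>] by (simp add: distrib_left exp_add)
    also have "\<dots> \<le> exp (aA * \<delta>) * (expZ W ?l (\<sigma> \<omega>) \<omega> * exp (aA^2 * T / 2))"
      using st_range[OF \<sigma> w] Z_pos[of ?l "\<sigma> \<omega>" \<omega>]
      by (intro mult_left_mono) (auto intro!: divide_right_mono mult_left_mono)
    finally show ?thesis by (simp add: mult_ac)
  qed
  have i: "integrable M ?f"
    by (rule Bochner_Integration.integrable_bound[where f="\<lambda>\<omega>. (exp (aA * \<delta>) * exp (aA^2 * T / 2)) * expZ W ?l (\<sigma> \<omega>) \<omega>"])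
       (use O(1) m up in \<open>auto intro!: AE_I2 simp: abs_mult\<close>)
  have i2: "integrable M (\<lambda>\<omega>. exp (aA * \<delta>) * expZ W ?l (\<sigma> \<omega>) \<omega>)" using O(1) by simp
  have "exp (aA * \<delta>) \<le> exp (aA * \<delta>) * expectation (\<lambda>\<omega>. expZ W ?l (\<sigma> \<omega>) \<omega>)"
    using O(2) by (simp add: mult_le_cancel_left1)
  also have "\<dots> = expectation (\<lambda>\<omega>. exp (aA * \<delta>) * expZ W ?l (\<sigma> \<omega>) \<omega>)" by simp
  also have "\<dots> \<le> expectation ?f" by (rule integral_mono[OF i2 i lo])
  finally show ?thesis by simp
qed

lemma bound_B2:
  assumes \<tau>: "\<tau> \<in> stopping_times0 M F T" and aB: "0 < aB" and d: "0 < \<delta>"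
  shows "(\<integral>\<omega>. - exp (- aB * (if \<tau> \<omega> \<le> 0 then W (\<tau> \<omega>) \<omega> else W 0 \<omega> + \<delta>)) \<partial>M) \<le> - exp (- aB * \<delta>)"
proof -
  have tm: "\<tau> \<in> borel_measurable M" by (rule st_meas[OF \<tau>])
  have e: "exp (- aB * (if \<tau> \<omega> \<le> 0 then W (\<tau> \<omega>) \<omega> else W 0 \<omega> + \<delta>)) = (if \<tau> \<omega> \<le> 0 then 1 else exp (- aB * \<delta>))"
    if w: "\<omega> \<in> space M" for \<omega>
    using st_range[OF \<tau> w] W0[OF w] by auto
  have m: "(\<lambda>\<omega>. if \<tau> \<omega> \<le> 0 then 1 else exp (- aB * \<delta>)) \<in> borel_measurable M"
    using tm by measurable
  have i: "integrable M (\<lambda>\<omega>. if \<tau> \<omega> \<le> 0 then 1 else exp (- aB * \<delta>))"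
    by (rule Bochner_Integration.integrable_bound[where f="\<lambda>_. (1::real)"]) (use m aB d in \<open>auto intro!: AE_I2\<close>)
  have "exp (- aB * \<delta>) = expectation (\<lambda>_. exp (- aB * \<delta>))" by (simp add: prob_space)
  also have "\<dots> \<le> expectation (\<lambda>\<omega>. if \<tau> \<omega> \<le> 0 then 1 else exp (- aB * \<delta>))"
    by (rule integral_mono[OF _ i]) (use aB d in auto)
  also have "\<dots> = expectation (\<lambda>\<omega>. exp (- aB * (if \<tau> \<omega> \<le> 0 then W (\<tau> \<omega>) \<omega> else W 0 \<omega> + \<delta>)))"
    using e by (intro Bochner_Integration.integral_cong) auto
  finally show ?thesis by simp
qed

end

theorem mainTheorem12:
  fixes M :: "'a measure" and F :: "real \<Rightarrow> 'a measure" and T \<alpha>A \<alpha>B \<delta> :: real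
    and W :: "real \<Rightarrow> 'a \<Rightarrow> real"
  assumes "filtered_prob_space_usual M F T"
    and "brownian_motion M F T W"
    and "0 < \<alpha>A" and "0 < \<alpha>B"
    and "0 < \<delta>" and "\<delta> < (\<alpha>A / 2) * T"
  defines "X \<equiv> (\<lambda>t \<omega>. W t \<omega>)" and "Y \<equiv> (\<lambda>t \<omega>. W t \<omega> + \<delta>)"
  shows "nash_equilibrium M F T \<alpha>A \<alpha>B X Y (\<lambda>_. 0) (\<lambda>_. T)
       \<and> nash_equilibrium M F T \<alpha>A \<alpha>B X Y (\<lambda>_. T) (\<lambda>_. 0)
       \<and> uA M \<alpha>A X Y (\<lambda>_. 0) (\<lambda>_. T) = -1 \<and> uB M \<alpha>B X Y (\<lambda>_. 0) (\<lambda>_. T) = -1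
       \<and> uA M \<alpha>A X Y (\<lambda>_. T) (\<lambda>_. 0) = - exp (\<alpha>A * \<delta>)
       \<and> uB M \<alpha>B X Y (\<lambda>_. T) (\<lambda>_. 0) = - exp (- \<alpha>B * \<delta>)"
proof -
  interpret B: bmset M F T W using assms(1,2) by (rule bmset.intro)
  have Tp: "0 < T" by (rule B.T_pos)
  have S0: "(\<lambda>_. 0) \<in> stopping_times0 M F T" using Tp by (intro B.const_st) auto
  have ST: "(\<lambda>_. T) \<in> stopping_times0 M F T" using Tp by (intro B.const_st) auto
  have uA0: "uA M \<alpha>A X Y (\<lambda>_. 0) \<sigma> = -1" if \<sigma>: "\<sigma> \<in> stopping_times0 M F T" for \<sigma>
  proof -
    have "uA M \<alpha>A X Y (\<lambda>_. 0) \<sigma> = (\<integral>\<omega>. -1 \<partial>M)"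
      unfolding uA_def payoff_def X_def Y_def
      by (intro Bochner_Integration.integral_cong refl) (use B.st_range[OF \<sigma>] B.W0 in auto)
    then show ?thesis by (simp add: B.prob_space)
  qed
  have uB0: "uB M \<alpha>B X Y (\<lambda>_. 0) (\<lambda>_. T) = -1"
  proof -
    have "uB M \<alpha>B X Y (\<lambda>_. 0) (\<lambda>_. T) = (\<integral>\<omega>. -1 \<partial>M)"
      unfolding uB_def payoff_def X_def Y_def
      by (intro Bochner_Integration.integral_cong refl) (use Tp B.W0 in auto)
    then show ?thesis by (simp add: B.prob_space)
  qed
  have uBT: "uB M \<alpha>B X Y \<tau> (\<lambda>_. T) \<le> -1" if \<tau>: "\<tau> \<in> stopping_times0 M F T" for \<tau>
  proof -
    have "uB M \<alpha>B X Y \<tau> (\<lambda>_. T) = (\<integral>\<omega>. - exp (- \<alpha>B * W (\<tau> \<omega>) \<omega>) \<partial>M)"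
      unfolding uB_def payoff_def X_def Y_def
      by (intro Bochner_Integration.integral_cong refl) (use B.st_range[OF \<tau>] in auto)
    also have "\<dots> \<le> -1" by (rule B.bound_B[OF \<tau> assms(4)])
    finally show ?thesis .
  qed
  have uA1: "uA M \<alpha>A X Y (\<lambda>_. T) (\<lambda>_. 0) = - exp (\<alpha>A * \<delta>)"
  proof -
    have "uA M \<alpha>A X Y (\<lambda>_. T) (\<lambda>_. 0) = (\<integral>\<omega>. - exp (\<alpha>A * \<delta>) \<partial>M)"
      unfolding uA_def payoff_def X_def Y_def
      by (intro Bochner_Integration.integral_cong refl) (use Tp B.W0 in auto)
    then show ?thesis by (simp add: B.prob_space)
  qed
  have uB1: "uB M \<alpha>B X Y (\<lambda>_. T) (\<lambda>_. 0) = - exp (- \<alpha>B * \<delta>)"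
  proof -
    have "uB M \<alpha>B X Y (\<lambda>_. T) (\<lambda>_. 0) = (\<integral>\<omega>. - exp (- \<alpha>B * \<delta>) \<partial>M)"
      unfolding uB_def payoff_def X_def Y_def
      by (intro Bochner_Integration.integral_cong refl) (use Tp B.W0 in auto)
    then show ?thesis by (simp add: B.prob_space)
  qed
  have uAs: "uA M \<alpha>A X Y (\<lambda>_. T) \<sigma> \<le> - exp (\<alpha>A * \<delta>)" if \<sigma>: "\<sigma> \<in> stopping_times0 M F T" for \<sigma>
    unfolding uA_def payoff_def X_def Y_def
    using B.bound_A[OF \<sigma> assms(3) assms(6) assms(5)] by simp
  have uBs: "uB M \<alpha>B X Y \<tau> (\<lambda>_. 0) \<le> - exp (- \<alpha>B * \<delta>)" if \<tau>: "\<tau> \<in> stopping_times0 M F T" for \<tau>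
    unfolding uB_def payoff_def X_def Y_def
    using B.bound_B2[OF \<tau> assms(4) assms(5)] by simp
  have N1: "nash_equilibrium M F T \<alpha>A \<alpha>B X Y (\<lambda>_. 0) (\<lambda>_. T)"
    unfolding nash_equilibrium_def using S0 ST uA0 uB0 uBT by simp
  have N2: "nash_equilibrium M F T \<alpha>A \<alpha>B X Y (\<lambda>_. T) (\<lambda>_. 0)"
    unfolding nash_equilibrium_def using S0 ST uA1 uB1 uAs uBs by simp
  show ?thesis using N1 N2 uA0[OF ST] uB0 uA1 uB1 by simp
qed

end
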